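(* Let $\theta(x,y)$ be the formula $y+x=x\to y=0$. Then $\mathcal{T}+\mathrm{IND}(\mathrm{Open}^-(\mathcal{T}))\nvdash\theta(x,x)$.
   Context: Language $\{0/0,s/1,p/1,+/2\}$; $\mathcal{T}$ has axioms (universally closed) $0\neq s(x)$, $p(0)=0$, $p(s(x))=x$, $x+0=x$, $x+s(y)=s(x+y)$. $\mathrm{Open}^-(\mathcal{T})$ is the set of quantifier-free formulas of this language having at most one free variable. $I_x\varphi=\forall\vec z(\varphi(0,\vec z)\wedge\forall x(\varphi(x,\vec z)\to\varphi(s(x),\vec z))\to\forall x\varphi(x,\vec z))$ and $\mathrm{IND}(\Gamma)=\{I_x\gamma:\gamma\in\Gamma\}$ (so here induction formulas have no parameters). *)

theory Defs
  imports Main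
begin

datatype tm = Var nat | Zero | S tm | P tm | Plus tm tm

datatype fm = Falsum | Eq tm tm | Imp fm fm | All nat fm

definition Neg :: "fm \<Rightarrow> fm" where "Neg a = Imp a Falsum"
definition And :: "fm \<Rightarrow> fm \<Rightarrow> fm" where "And a b = Neg (Imp a (Neg b))"

fun fvt :: "tm \<Rightarrow> nat set" where
  "fvt (Var x) = {x}"
| "fvt Zero = {}"
| "fvt (S t) = fvt t"
| "fvt (P t) = fvt t"
| "fvt (Plus t u) = fvt t \<union> fvt u"

fun fv :: "fm \<Rightarrow> nat set" where
  "fv Falsum = {}"
| "fv (Eq t u) = fvt t \<union> fvt u"
| "fv (Imp a b) = fv a \<union> fv b"
| "fv (All x a) = fv a - {x}"

fun qfree :: "fm \<Rightarrow> bool" where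
  "qfree Falsum = True"
| "qfree (Eq t u) = True"
| "qfree (Imp a b) = (qfree a \<and> qfree b)"
| "qfree (All x a) = False"

text \<open>Substitution of a term for the free occurrences of a variable
(naive; used only under the side condition \<open>substitutable\<close>).\<close>

fun substt :: "nat \<Rightarrow> tm \<Rightarrow> tm \<Rightarrow> tm" where
  "substt x r (Var y) = (if y = x then r else Var y)"
| "substt x r Zero = Zero"
| "substt x r (S t) = S (substt x r t)"
| "substt x r (P t) = P (substt x r t)"
| "substt x r (Plus t u) = Plus (substt x r t) (substt x r u)"

fun subst :: "nat \<Rightarrow> tm \<Rightarrow> fm \<Rightarrow> fm" where
  "subst x r Falsum = Falsum"
| "subst x r (Eq t u) = Eq (substt x r t) (substt x r u)"
| "subst x r (Imp a b) = Imp (subst x r a) (subst x r b)"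
| "subst x r (All y a) = (if y = x then All y a else All y (subst x r a))"

fun substitutable :: "tm \<Rightarrow> nat \<Rightarrow> fm \<Rightarrow> bool" where
  "substitutable r x Falsum = True"
| "substitutable r x (Eq t u) = True"
| "substitutable r x (Imp a b) = (substitutable r x a \<and> substitutable r x b)"
| "substitutable r x (All y a) =
     (x \<notin> fv (All y a) \<or> (y \<notin> fvt r \<and> substitutable r x a))"

fun alls :: "nat list \<Rightarrow> fm \<Rightarrow> fm" where
  "alls [] a = a"
| "alls (x # xs) a = All x (alls xs a)"

inductive proves :: "fm set \<Rightarrow> fm \<Rightarrow> bool" where
  Ax: "a \<in> \<Gamma> \<Longrightarrow> proves \<Gamma> a"
| K: "proves \<Gamma> (Imp a (Imp b a))"
| Sdist: "proves \<Gamma> (Imp (Imp a (Imp b c)) (Imp (Imp a b) (Imp a c)))"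
| DNeg: "proves \<Gamma> (Imp (Neg (Neg a)) a)"
| Inst: "substitutable t x a \<Longrightarrow> proves \<Gamma> (Imp (All x a) (subst x t a))"
| AllImp: "x \<notin> fv a \<Longrightarrow> proves \<Gamma> (Imp (All x (Imp a b)) (Imp a (All x b)))"
| Refl: "proves \<Gamma> (Eq (Var x) (Var x))"
| Leib: "substitutable (Var y) x a \<Longrightarrow>
           proves \<Gamma> (Imp (Eq (Var x) (Var y)) (Imp a (subst x (Var y) a)))"
| MP: "proves \<Gamma> (Imp a b) \<Longrightarrow> proves \<Gamma> a \<Longrightarrow> proves \<Gamma> b"
| Gen: "proves \<Gamma> a \<Longrightarrow> proves \<Gamma> (All x a)"

definition T :: "fm set" where
  "T = { All 0 (Neg (Eq Zero (S (Var 0)))),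
         Eq (P Zero) Zero,
         All 0 (Eq (P (S (Var 0))) (Var 0)),
         All 0 (Eq (Plus (Var 0) Zero) (Var 0)),
         All 0 (All 1 (Eq (Plus (Var 0) (S (Var 1))) (S (Plus (Var 0) (Var 1))))) }"

definition OpenMinus :: "fm set" where
  "OpenMinus = {a. qfree a \<and> card (fv a) \<le> 1}"

definition Ind :: "nat \<Rightarrow> fm \<Rightarrow> fm" where
  "Ind x a = alls (sorted_list_of_set (fv a - {x}))
      (Imp (And (subst x Zero a) (All x (Imp a (subst x (S (Var x)) a)))) (All x a))"

definition IND :: "fm set \<Rightarrow> fm set" where
  "IND \<Gamma> = {Ind x a | x a. a \<in> \<Gamma>}"

definition theta :: "tm \<Rightarrow> tm \<Rightarrow> fm" where
  "theta x y = Imp (Eq (Plus y x) x) (Eq y Zero)"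

end

theory Submission
  imports Defs
begin

datatype M = N nat | Z int

fun sM :: "M \<Rightarrow> M" where
  "sM (N n) = N (n + 1)" | "sM (Z k) = Z (k + 1)"
fun pM :: "M \<Rightarrow> M" where
  "pM (N n) = N (n - 1)" | "pM (Z k) = Z (k - 1)"
fun plusM :: "M \<Rightarrow> M \<Rightarrow> M" where
  "plusM (N a) (N b) = N (a + b)"
| "plusM (N a) (Z k) = Z (int a + k)"
| "plusM (Z k) (N b) = Z (k + int b)"
| "plusM (Z k) (Z j) = Z (k + j)"

fun evalt :: "(nat \<Rightarrow> M) \<Rightarrow> tm \<Rightarrow> M" where
  "evalt e (Var x) = e x"
| "evalt e Zero = N 0"
| "evalt e (S t) = sM (evalt e t)"
| "evalt e (P t) = pM (evalt e t)"
| "evalt e (Plus t u) = plusM (evalt e t) (evalt e u)"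

fun eval :: "(nat \<Rightarrow> M) \<Rightarrow> fm \<Rightarrow> bool" where
  "eval e Falsum = False"
| "eval e (Eq t u) = (evalt e t = evalt e u)"
| "eval e (Imp a b) = (eval e a \<longrightarrow> eval e b)"
| "eval e (All x a) = (\<forall>v. eval (e(x := v)) a)"

lemma coin_t: "(\<forall>z\<in>fvt t. e z = e' z) \<Longrightarrow> evalt e t = evalt e' t"
  by (induction t) auto

lemma coin: "(\<forall>z\<in>fv a. e z = e' z) \<Longrightarrow> eval e a = eval e' a"
proof (induction a arbitrary: e e')
  case (Eq t u) then show ?case using coin_t by (metis Un_iff eval.simps(2) fv.simps(2))
next
  case (All x a)
  have "\<And>v. eval (e(x:=v)) a = eval (e'(x:=v)) a"
    using All by (intro All.IH) auto
  then show ?case by simp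
next
  case (Imp a b)
  have "eval e a = eval e' a" "eval e b = eval e' b"
    using Imp by (intro Imp.IH; auto)+
  then show ?case by simp
qed auto

lemma subst_nofree_t: "x \<notin> fvt t \<Longrightarrow> substt x r t = t"
  by (induction t) auto

lemma subst_nofree: "x \<notin> fv a \<Longrightarrow> subst x r a = a"
  by (induction a) (auto simp: subst_nofree_t)

lemma subst_t: "evalt e (substt x r t) = evalt (e(x := evalt e r)) t"
  by (induction t) auto

lemma subst_lemma: "substitutable r x a \<Longrightarrow> eval e (subst x r a) = eval (e(x := evalt e r)) a"
proof (induction a arbitrary: e)
  case (Eq t u) then show ?case by (simp only: subst.simps eval.simps subst_t)
next
  case (All y a)
  show ?case
  proof (cases "y = x")
    case True then show ?thesis by (simp del: fun_upd_apply)
  next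
    case False
    show ?thesis
    proof (cases "x \<notin> fv (All y a)")
      case True
      then have "x \<notin> fv a" using False by auto
      then have "subst x r a = a" by (rule subst_nofree)
      moreover have "eval (e(x := evalt e r)) (All y a) = eval e (All y a)"
        using True by (intro coin) auto
      ultimately show ?thesis using False by (simp del: fun_upd_apply)
    next
      case nf: False
      then have yr: "y \<notin> fvt r" and sa: "substitutable r x a" using All.prems by auto
      have "\<And>v. eval (e(y:=v)) (subst x r a) = eval (e(x := evalt e r, y := v)) a"
      proof -
        fix v
        have "eval (e(y:=v)) (subst x r a) = eval (e(y:=v, x := evalt (e(y:=v)) r)) a"
          by (rule All.IH[OF sa])
        also have "evalt (e(y:=v)) r = evalt e r" using yr by (intro coin_t) auto
        also have "e(y:=v, x := evalt e r) = e(x := evalt e r, y := v)"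
          using False by (simp add: fun_upd_twist)
        finally show "eval (e(y:=v)) (subst x r a) = eval (e(x := evalt e r, y := v)) a" .
      qed
      then show ?thesis using False by (simp del: fun_upd_apply)
    qed
  qed
qed auto

definition Good :: "fm set \<Rightarrow> bool" where
  "Good G = (\<forall>b\<in>G. \<forall>e. eval e b)"

lemma soundness: "proves G a \<Longrightarrow> Good G \<Longrightarrow> eval e a"
proof (induction arbitrary: e rule: proves.induct)
  case (Ax a G) then show ?case by (auto simp: Good_def)
next
  case (K G a b) then show ?case by simp
next
  case (Sdist G a b c) then show ?case by simp
next
  case (DNeg G a) then show ?case by (simp add: Neg_def)
next
  case (Inst t x a G) then show ?case by (simp add: subst_lemma)
next
  case (AllImp x a G b)
  then show ?case
    by simp (metis coin fun_upd_other)
next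
  case (Refl G x) then show ?case by simp
next
  case (Leib y x a G)
  show ?case
  proof (simp, intro impI)
    assume h: "e x = e y" "eval e a"
    have "e(x := e y) = e" using h(1) by auto
    then show "eval e (subst x (Var y) a)" using subst_lemma[OF Leib(1), of e] h by simp
  qed
next
  case (MP G a b) then show ?case by simp
next
  case (Gen G a x) then show ?case by simp
qed

(* linear description of terms under a constant assignment *)
fun ca :: "tm \<Rightarrow> int" where
  "ca (Var _) = 1" | "ca Zero = 0" | "ca (S t) = ca t" | "ca (P t) = ca t"
| "ca (Plus t u) = ca t + ca u"

fun cb :: "tm \<Rightarrow> int" where
  "cb (Var _) = 0" | "cb Zero = 0" | "cb (S t) = cb t + 1"
| "cb (P t) = (if ca t = 0 then max 0 (cb t - 1) else cb t - 1)"
| "cb (Plus t u) = cb t + cb u"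

fun cp :: "tm \<Rightarrow> int" where
  "cp (Var _) = 0" | "cp Zero = 0" | "cp (S t) = cp t" | "cp (P t) = cp t + 1"
| "cp (Plus t u) = cp t + cp u"

lemma L1: "ca t \<ge> 0 \<and> (ca t = 0 \<longrightarrow> cb t \<ge> 0) \<and> cb t \<ge> - cp t \<and> cp t \<ge> 0"
  by (induction t) auto

lemma L2: "evalt (\<lambda>_. Z k) t = (if ca t = 0 then N (nat (cb t)) else Z (ca t * k + cb t))"
proof (induction t)
  case (S t)
  then show ?case using L1[of t] by (auto simp: nat_add_distrib)
next
  case (Plus t u)
  then show ?case using L1[of t] L1[of u]
    by (auto simp: algebra_simps nat_add_distrib)
qed (use L1 in \<open>auto simp: nat_diff_distrib'\<close>)

lemma nonneg: "int n \<ge> cp t \<Longrightarrow> ca t * int n + cb t \<ge> 0"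
proof -
  assume n: "int n \<ge> cp t"
  show ?thesis
  proof (cases "ca t = 0")
    case True then show ?thesis using L1[of t] by simp
  next
    case False
    then have "ca t \<ge> 1" using L1[of t] by simp
    then have "ca t * int n \<ge> int n" by (simp add: mult_le_cancel_right1)
    then show ?thesis using L1[of t] n by linarith
  qed
qed

lemma L3: "int n \<ge> cp t \<Longrightarrow> evalt (\<lambda>_. N n) t = N (nat (ca t * int n + cb t))"
proof (induction t)
  case (S t)
  then show ?case using nonneg[of t n] by (auto simp: nat_add_distrib)
next
  case (P t)
  then have "evalt (\<lambda>_. N n) t = N (nat (ca t * int n + cb t))" by simp
  then show ?case using nonneg[of t n] P.prems by (auto simp: nat_diff_distrib')
next
  case (Plus t u)
  have ct: "int n \<ge> cp t" and cu: "int n \<ge> cp u" using Plus.prems L1[of t] L1[of u] by auto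
  have "evalt (\<lambda>_. N n) (Plus t u) = N (nat (ca t * int n + cb t) + nat (ca u * int n + cb u))"
    using Plus.IH ct cu by simp
  also have "nat (ca t * int n + cb t) + nat (ca u * int n + cb u) = nat (ca (Plus t u) * int n + cb (Plus t u))"
    using nonneg[OF ct] nonneg[OF cu] by (simp add: algebra_simps flip: nat_add_distrib)
  finally show ?case .
qed auto

lemma arith_key:
  fixes a1 a2 b1 b2 k :: int
  assumes "a1 \<noteq> a2" "\<bar>k\<bar> > \<bar>b2 - b1\<bar>"
  shows "a1 * k + b1 \<noteq> a2 * k + b2"
proof
  assume "a1 * k + b1 = a2 * k + b2"
  then have "(a1 - a2) * k = b2 - b1" by (simp add: algebra_simps)
  then have "\<bar>a1 - a2\<bar> * \<bar>k\<bar> = \<bar>b2 - b1\<bar>" by (metis abs_mult)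
  moreover have "\<bar>a1 - a2\<bar> \<ge> 1" using assms(1) by linarith
  then have "\<bar>a1 - a2\<bar> * \<bar>k\<bar> \<ge> \<bar>k\<bar>" by (simp add: mult_le_cancel_right1)
  ultimately show False using assms(2) by linarith
qed

fun gen :: "fm \<Rightarrow> bool" where
  "gen Falsum = False"
| "gen (Eq t u) = (ca t = ca u \<and> cb t = cb u)"
| "gen (Imp a b) = (gen a \<longrightarrow> gen b)"
| "gen (All x a) = False"

lemma atomic_ev:
  "\<exists>K. \<forall>k n. (\<bar>k\<bar> \<ge> K \<longrightarrow> (eval (\<lambda>_. Z k) (Eq t u) = gen (Eq t u)))
            \<and> (int n \<ge> K \<longrightarrow> (eval (\<lambda>_. N n) (Eq t u) = gen (Eq t u)))"
proof (intro exI allI conjI impI)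
  define K where "K = cp t + cp u + \<bar>cb u - cb t\<bar> + 1"
  fix k :: int and n :: nat
  show "eval (\<lambda>_. Z k) (Eq t u) = gen (Eq t u)" if "\<bar>k\<bar> \<ge> K"
  proof -
    have kk: "\<bar>k\<bar> > \<bar>cb u - cb t\<bar>" using that L1[of t] L1[of u] unfolding K_def by linarith
    show ?thesis
      using arith_key[OF _ kk, of "ca t" "ca u"] L1[of t] L1[of u]
      by (cases "ca t = ca u") (auto simp: L2)
  qed
  show "eval (\<lambda>_. N n) (Eq t u) = gen (Eq t u)" if "int n \<ge> K"
  proof -
    have ct: "int n \<ge> cp t" and cu: "int n \<ge> cp u" using that L1[of t] L1[of u] unfolding K_def by auto
    have kk: "\<bar>int n\<bar> > \<bar>cb u - cb t\<bar>" using that L1[of t] L1[of u] unfolding K_def by linarith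
    show ?thesis
      using arith_key[OF _ kk, of "ca t" "ca u"] nonneg[OF ct] nonneg[OF cu]
      by (cases "ca t = ca u") (auto simp: L3[OF ct] L3[OF cu] eq_nat_nat_iff)
  qed
qed

lemma qf_ev:
  "qfree a \<Longrightarrow> \<exists>K. \<forall>k n. (\<bar>k\<bar> \<ge> K \<longrightarrow> (eval (\<lambda>_. Z k) a = gen a))
            \<and> (int n \<ge> K \<longrightarrow> (eval (\<lambda>_. N n) a = gen a))"
proof (induction a)
  case Falsum then show ?case by simp
next
  case (Eq t u) then show ?case using atomic_ev by blast
next
  case (Imp a b)
  then obtain K1 K2 where
    K1: "\<forall>k n. (\<bar>k\<bar> \<ge> K1 \<longrightarrow> (eval (\<lambda>_. Z k) a = gen a)) \<and> (int n \<ge> K1 \<longrightarrow> (eval (\<lambda>_. N n) a = gen a))" and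
    K2: "\<forall>k n. (\<bar>k\<bar> \<ge> K2 \<longrightarrow> (eval (\<lambda>_. Z k) b = gen b)) \<and> (int n \<ge> K2 \<longrightarrow> (eval (\<lambda>_. N n) b = gen b))"
    by auto
  show ?case
    by (rule exI[of _ "max K1 K2"]) (use K1 K2 in auto)
next
  case (All x a) then show ?case by simp
qed

lemma const_induct:
  assumes qf: "qfree a"
    and base: "eval (\<lambda>_. N 0) a"
    and stp: "\<And>v. eval (\<lambda>_. v) a \<Longrightarrow> eval (\<lambda>_. sM v) a"
  shows "eval (\<lambda>_. v) a"
proof -
  have nat_all: "eval (\<lambda>_. N n) a" for n
  proof (induction n)
    case 0 then show ?case using base by simp
  next
    case (Suc n) then show ?case using stp[of "N n"] by simp
  qed
  obtain K where K: "\<forall>k n. (\<bar>k\<bar> \<ge> K \<longrightarrow> (eval (\<lambda>_. Z k) a = gen a))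
            \<and> (int n \<ge> K \<longrightarrow> (eval (\<lambda>_. N n) a = gen a))"
    using qf_ev[OF qf] by blast
  have g: "gen a" using K nat_all[of "nat \<bar>K\<bar>"] by auto
  have z: "eval (\<lambda>_. Z k) a" for k
  proof -
    define k0 where "k0 = min k (- \<bar>K\<bar>)"
    have b0: "eval (\<lambda>_. Z k0) a" using K g unfolding k0_def by auto
    have "k0 \<le> k" unfolding k0_def by simp
    then show ?thesis
    proof (induction k rule: int_ge_induct)
      case base then show ?case using b0 by simp
    next
      case (step i) then show ?case using stp[of "Z i"] by simp
    qed
  qed
  show ?thesis by (cases v) (use nat_all z in auto)
qed

lemma alls_valid: "(\<And>e. eval e a) \<Longrightarrow> eval e (alls xs a)"
  by (induction xs arbitrary: e) auto

lemma qfree_substitutable: "qfree a \<Longrightarrow> substitutable r x a"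
  by (induction a) auto

lemma fvt_finite: "finite (fvt t)" by (induction t) auto
lemma fv_finite: "finite (fv a)" by (induction a) (auto simp: fvt_finite)

lemma Ind_valid:
  assumes "a \<in> OpenMinus"
  shows "eval e (Ind x a)"
  unfolding Ind_def
proof (rule alls_valid)
  fix e
  have qf: "qfree a" and c: "card (fv a) \<le> 1" using assms by (auto simp: OpenMinus_def)
  have sub0: "eval e (subst x Zero a) = eval (e(x := N 0)) a" for e
    using subst_lemma[OF qfree_substitutable[OF qf]] by simp
  have subS: "eval e (subst x (S (Var x)) a) = eval (e(x := sM (e x))) a" for e
    using subst_lemma[OF qfree_substitutable[OF qf]] by simp
  show "eval e (Imp (And (subst x Zero a) (All x (Imp a (subst x (S (Var x)) a)))) (All x a))"
  proof -
    have main: "eval (e(x := v)) a" if h0: "eval (e(x := N 0)) a"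
      and hs: "\<forall>v. eval (e(x := v)) a \<longrightarrow> eval (e(x := sM v)) a" for v
    proof (cases "x \<in> fv a")
      case False
      have "eval (e(x := v)) a = eval (e(x := N 0)) a" using False by (intro coin) auto
      then show ?thesis using h0 by simp
    next
      case True
      have sub: "fv a \<subseteq> {x}"
        using True c fv_finite[of a] by (auto simp: card_le_Suc0_iff_eq)
      have eq: "eval (e(x := w)) a = eval (\<lambda>_. w) a" for w
        using sub by (intro coin) auto
      show ?thesis using const_induct[OF qf, of v] h0 hs by (simp add: eq)
    qed
    show ?thesis
      unfolding And_def Neg_def eval.simps sub0 subS fun_upd_same fun_upd_upd
      using main by metis
  qed
qed

lemma T_valid: "b \<in> T \<Longrightarrow> eval e b"
proof -
  have 1: "N 0 \<noteq> sM v" for v by (cases v) auto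
  have 2: "pM (sM v) = v" for v by (cases v) auto
  have 3: "plusM v (N 0) = v" for v by (cases v) auto
  have 4: "plusM v (sM w) = sM (plusM v w)" for v w by (cases v; cases w) auto
  assume "b \<in> T" then show ?thesis
    unfolding T_def by (auto simp: Neg_def 1 2 3 4)
qed

theorem lemma10:
  shows "\<not> proves (T \<union> IND OpenMinus) (theta (Var 0) (Var 0))"
proof
  assume pr: "proves (T \<union> IND OpenMinus) (theta (Var 0) (Var 0))"
  have "Good (T \<union> IND OpenMinus)"
    unfolding Good_def IND_def using T_valid Ind_valid by auto
  then have "eval (\<lambda>_. Z 0) (theta (Var 0) (Var 0))" using soundness[OF pr] by blast
  then show False by (simp add: theta_def)
qed

end
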